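(* Let $q$ be a complex number with $|q|<1$. Then \[ \sum_{n\geq 0} q^{2n} (q^{4n+4};q^4)_\infty (q;q)_{2n+1} = \frac{2(1-q)(q^4;q^4)_\infty}{1+q^3}- \frac{(q;q)_\infty}{1+q^3}, \] and \[ (1+q^3) \sum_{n\geq 0} \frac{(-q^2;q^2)_n\, q^{4n+2}}{(q;q^2)_{n+1}} = \frac{(q^4;q^4)_\infty}{(q^2;q)_\infty}-1 . \]
   Context: For a complex number $a$ and $|q|<1$: $(a;q)_0=1$, $(a;q)_n=\prod_{j=0}^{n-1}(1-aq^j)$ for integers $n\ge 1$, and $(a;q)_\infty=\prod_{j=0}^{\infty}(1-aq^j)$. *)

theory Defs
  imports "HOL-Analysis.Analysis"
begin

definition qpoch :: "complex \<Rightarrow> complex \<Rightarrow> nat \<Rightarrow> complex" where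
  "qpoch a q n = (\<Prod>j<n. 1 - a * q ^ j)"

definition qpoch_inf :: "complex \<Rightarrow> complex \<Rightarrow> complex" where
  "qpoch_inf a q = lim (\<lambda>n. qpoch a q n)"

end

theory Submission
  imports Defs
begin

lemma qpoch_Suc: "qpoch a q (Suc n) = qpoch a q n * (1 - a * q ^ n)"
  by (simp add: qpoch_def)

lemma qpoch_conv:
  assumes "norm q < 1"
  shows "convergent_prod (\<lambda>j. 1 - a * q ^ j) \<and> (\<lambda>n. qpoch a q n) \<longlonglongrightarrow> qpoch_inf a q
         \<and> qpoch_inf a q = prodinf (\<lambda>j. 1 - a * q ^ j)"
proof -
  have "summable (\<lambda>j. norm a * norm q ^ j)"
    using assms by (intro summable_mult summable_geometric) simp
  hence "summable (\<lambda>j. norm ((1 - a * q ^ j) - 1))"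
    by (simp add: norm_mult norm_power)
  hence cp: "convergent_prod (\<lambda>j. 1 - a * q ^ j)"
    by (intro abs_convergent_prod_imp_convergent_prod summable_imp_abs_convergent_prod)
  hence "(\<lambda>n. \<Prod>i\<le>n. 1 - a * q ^ i) \<longlonglongrightarrow> prodinf (\<lambda>j. 1 - a * q ^ j)"
    by (rule convergent_prod_LIMSEQ)
  hence "(\<lambda>n. qpoch a q (Suc n)) \<longlonglongrightarrow> prodinf (\<lambda>j. 1 - a * q ^ j)"
    by (simp add: qpoch_def lessThan_Suc_atMost)
  hence L: "(\<lambda>n. qpoch a q n) \<longlonglongrightarrow> prodinf (\<lambda>j. 1 - a * q ^ j)"
    by (rule LIMSEQ_imp_Suc)
  hence "qpoch_inf a q = prodinf (\<lambda>j. 1 - a * q ^ j)"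
    unfolding qpoch_inf_def by (rule limI)
  with L cp show ?thesis by simp
qed

lemma qpoch_LIMSEQ: "norm q < 1 \<Longrightarrow> (\<lambda>n. qpoch a q n) \<longlonglongrightarrow> qpoch_inf a q"
  using qpoch_conv by blast

lemma factor_nz:
  assumes "norm a < 1" "norm q < 1"
  shows "1 - a * q ^ j \<noteq> (0::complex)"
proof
  assume "1 - a * q ^ j = 0"
  hence "norm (a * q ^ j) = 1" by (metis eq_iff_diff_eq_0 norm_one)
  moreover have "norm (a * q ^ j) \<le> norm a"
    using assms by (simp add: norm_mult norm_power mult_left_le power_le_one)
  ultimately show False using assms by simp
qed

lemma qpoch_nz:
  assumes "norm a < 1" "norm q < 1"
  shows "qpoch a q n \<noteq> 0" "qpoch_inf a q \<noteq> 0"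
proof -
  show "qpoch a q n \<noteq> 0" unfolding qpoch_def using factor_nz[OF assms] by simp
  show "qpoch_inf a q \<noteq> 0"
    using qpoch_conv[OF assms(2), of a] factor_nz[OF assms] by (metis prodinf_nonzero)
qed

lemma qpoch_add: "qpoch a q (n + m) = qpoch a q n * qpoch (a * q ^ n) q m"
  by (induction m) (simp_all add: qpoch_Suc power_add mult_ac qpoch_def[of _ _ 0])

lemma qpoch_inf_shift:
  assumes "norm q < 1"
  shows "qpoch_inf a q = qpoch a q n * qpoch_inf (a * q ^ n) q"
proof -
  have "(\<lambda>m. qpoch a q (m + n)) \<longlonglongrightarrow> qpoch_inf a q"
    using qpoch_LIMSEQ[OF assms] by (rule LIMSEQ_ignore_initial_segment)
  moreover have "(\<lambda>m. qpoch a q (m + n)) \<longlonglongrightarrow> qpoch a q n * qpoch_inf (a * q ^ n) q"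
    unfolding add.commute[of _ n] qpoch_add
    by (intro tendsto_mult tendsto_const qpoch_LIMSEQ assms)
  ultimately show ?thesis by (rule LIMSEQ_unique)
qed

lemma keyK: "qpoch q q (2*n) * qpoch (-(q^2)) (q^2) n = qpoch (q^4) (q^4) n * qpoch q (q^2) n"
proof (induction n)
  case 0 then show ?case by (simp add: qpoch_def)
next
  case (Suc n)
  have e: "2 * Suc n = Suc (Suc (2*n))" by simp
  have "qpoch q q (2 * Suc n) * qpoch (-(q^2)) (q^2) (Suc n)
     = (qpoch q q (2*n) * qpoch (-(q^2)) (q^2) n) * ((1 - q*q^(2*n)) * (1 - q*q^(2*n+1)) * (1 + q^2*(q^2)^n))"
    unfolding e qpoch_Suc by (simp add: mult_ac)
  also have "(1 - q*q^(2*n)) * (1 - q*q^(2*n+1)) * (1 + q^2*(q^2)^n) = (1 - q^4*(q^4)^n) * (1 - q*(q^2)^n)"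
  proof -
    have h: "q^(2*n) = (q^n)^2" "q^(2*n+1) = q*(q^n)^2" "(q^2)^n = (q^n)^2" "(q^4)^n = (q^n)^4"
      by (simp_all add: power_mult[symmetric] mult.commute)
    show ?thesis unfolding h by algebra
  qed
  also have "(qpoch q q (2*n) * qpoch (-(q^2)) (q^2) n) = qpoch (q^4) (q^4) n * qpoch q (q^2) n"
    by (rule Suc.IH)
  also have "qpoch (q^4) (q^4) n * qpoch q (q^2) n * ((1 - q^4*(q^4)^n) * (1 - q*(q^2)^n))
     = qpoch (q^4) (q^4) (Suc n) * qpoch q (q^2) (Suc n)"
    by (simp add: qpoch_Suc mult_ac)
  finally show ?case .
qed

lemma keyK2: "qpoch q q (Suc n) = (1 - q) * qpoch (q^2) q n"
  by (induction n) (simp_all add: qpoch_Suc power2_eq_square mult_ac qpoch_def[of _ _ 0])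

lemma norm_pow_lt1: "norm (q::complex) < 1 \<Longrightarrow> k > 0 \<Longrightarrow> norm (q ^ k) < 1"
  by (simp add: norm_power power_less_one_iff)

lemma CB_PA:
  assumes q: "norm q < 1"
  shows "qpoch_inf q q * qpoch_inf (-(q^2)) (q^2) = qpoch_inf (q^4) (q^4) * qpoch_inf q (q^2)"
proof -
  have sm: "strict_mono (\<lambda>n::nat. 2*n)" by (simp add: strict_mono_def)
  have "(\<lambda>n. qpoch q q (2*n)) \<longlonglongrightarrow> qpoch_inf q q"
    using LIMSEQ_subseq_LIMSEQ[OF qpoch_LIMSEQ[OF q] sm] by (simp add: o_def)
  hence "(\<lambda>n. qpoch q q (2*n) * qpoch (-(q^2)) (q^2) n) \<longlonglongrightarrow> qpoch_inf q q * qpoch_inf (-(q^2)) (q^2)"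
    using q by (intro tendsto_mult qpoch_LIMSEQ norm_pow_lt1) auto
  moreover have "(\<lambda>n. qpoch q q (2*n) * qpoch (-(q^2)) (q^2) n) \<longlonglongrightarrow> qpoch_inf (q^4) (q^4) * qpoch_inf q (q^2)"
    unfolding keyK using q by (intro tendsto_mult qpoch_LIMSEQ norm_pow_lt1) auto
  ultimately show ?thesis by (rule LIMSEQ_unique)
qed

lemma C_E:
  assumes q: "norm q < 1"
  shows "qpoch_inf q q = (1 - q) * qpoch_inf (q^2) q"
proof -
  have "(\<lambda>n. qpoch q q (Suc n)) \<longlonglongrightarrow> qpoch_inf q q"
    using qpoch_LIMSEQ[OF q] by (rule LIMSEQ_Suc)
  moreover have "(\<lambda>n. qpoch q q (Suc n)) \<longlonglongrightarrow> (1 - q) * qpoch_inf (q^2) q"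
    unfolding keyK2 using q by (intro tendsto_mult qpoch_LIMSEQ tendsto_const)
  ultimately show ?thesis by (rule LIMSEQ_unique)
qed

lemma part1:
  assumes q: "norm q < 1"
  shows "(\<Sum>n. q ^ (2*n) * qpoch_inf (q ^ (4*n+4)) (q ^ 4) * qpoch q q (2*n+1))
           = 2 * (1 - q) * qpoch_inf (q ^ 4) (q ^ 4) / (1 + q ^ 3) - qpoch_inf q q / (1 + q ^ 3)"
proof -
  have n2: "norm (q^2) < 1" and n4: "norm (q^4) < 1" and n3: "norm (q^3) < 1"
    and nm2: "norm (-(q^2)) < 1" using q norm_pow_lt1 by auto
  have q3: "1 + q^3 \<noteq> 0"
  proof
    assume "1 + q^3 = 0" hence "q^3 = -1" by (simp add: add_eq_0_iff)
    with n3 show False by simp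
  qed
  define A where "A = qpoch_inf q (q^2)"
  define B where "B = qpoch_inf (-(q^2)) (q^2)"
  define P where "P = qpoch_inf (q^4) (q^4)"
  define C where "C = qpoch_inf q q"
  have Bnz: "B \<noteq> 0" unfolding B_def using qpoch_nz[OF nm2 n2] by simp
  have CB: "C * B = P * A" unfolding A_def B_def C_def P_def using CB_PA[OF q] .
  define s where "s n = qpoch q (q^2) n / qpoch (-(q^2)) (q^2) n" for n
  define d where "d N = -1 + (q-1)*q^(2*N) + q^(4*N+1)" for N
  define f where "f n = q ^ (2*n) * qpoch_inf (q ^ (4*n+4)) (q ^ 4) * qpoch q q (2*n+1)" for n
  have fe: "f n = P * (q^(2*n) * (1 - q*q^(2*n)) * s n)" for n
  proof -
    have e1: "(q^4) * (q^4)^n = q^(4*n+4)" by (simp add: power_mult[symmetric] power_add mult.commute)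
    have P1: "P = qpoch (q^4) (q^4) n * qpoch_inf (q^(4*n+4)) (q^4)"
      unfolding P_def using qpoch_inf_shift[OF n4, of "q^4" n] e1 by simp
    have Bn: "qpoch (-(q^2)) (q^2) n \<noteq> 0" using qpoch_nz[OF nm2 n2] by simp
    have K: "qpoch q q (2*n) = qpoch (q^4) (q^4) n * qpoch q (q^2) n / qpoch (-(q^2)) (q^2) n"
      using keyK[of q n] Bn by (simp add: field_simps)
    have Q: "qpoch q q (2*n+1) = qpoch q q (2*n) * (1 - q*q^(2*n))"
      by (simp add: qpoch_Suc)
    show ?thesis unfolding f_def Q K P1 s_def by (simp add: field_simps)
  qed
  have tel: "(1 + q^3) * (\<Sum>n<N. q^(2*n) * (1 - q*q^(2*n)) * s n) = d N * s N + 2*(1-q)" for N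
  proof (induction N)
    case 0 show ?case by (simp add: d_def s_def qpoch_def)
  next
    case (Suc N)
    define x where "x = q^N"
    have h: "q^(2*N) = x^2" "(q^2)^N = x^2" "q^(4*N+1) = q*x^4" "q^(2*Suc N) = q^2*x^2"
      "q^(4*Suc N+1) = q^5*x^4"
      unfolding x_def power_mult[symmetric]
      by (simp_all add: power_add[symmetric] mult.commute)
    have nz: "1 + q^2*x^2 \<noteq> 0" using factor_nz[OF nm2 n2, of N] h by simp
    have ss: "s (Suc N) = s N * ((1 - q*x^2)/(1 + q^2*x^2))"
      unfolding s_def using h nz qpoch_nz(1)[OF nm2 n2, of N] by (simp add: qpoch_Suc field_simps)
    have poly: "((-1 + (q-1)*x^2 + q*x^4) + (1+q^3)*x^2*(1-q*x^2))*(1+q^2*x^2)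
       = (-1 + (q-1)*(q^2*x^2) + q^5*x^4)*(1-q*x^2)" by algebra
    have poly2: "(-1 + (q-1)*x^2 + q*x^4) + (1+q^3)*x^2*(1-q*x^2)
       = (-1 + (q-1)*(q^2*x^2) + q^5*x^4)*((1-q*x^2)/(1+q^2*x^2))"
      using poly nz by (simp add: field_simps)
    have "(1 + q^3) * (\<Sum>n<Suc N. q^(2*n) * (1 - q*q^(2*n)) * s n)
       = d N * s N + 2*(1-q) + (1+q^3)*(x^2*(1-q*x^2)* s N)"
      using Suc.IH h by (simp add: distrib_left)
    also have "\<dots> = ((-1 + (q-1)*x^2 + q*x^4) + (1+q^3)*x^2*(1-q*x^2)) * s N + 2*(1-q)"
      unfolding d_def h by (simp add: algebra_simps)
    also have "\<dots> = d (Suc N) * s (Suc N) + 2*(1-q)"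
      unfolding poly2 ss d_def h by (simp add: mult_ac)
    finally show ?case .
  qed
  have dlim: "d \<longlonglongrightarrow> -1 + (q-1)*0 + q*0"
  proof -
    have "d = (\<lambda>N. -1 + (q-1)*(q^2)^N + q*(q^4)^N)"
      by (auto simp: d_def fun_eq_iff power_mult[symmetric] power_add mult.commute)
    thus ?thesis using n2 n4
      by (simp only:) (intro tendsto_intros LIMSEQ_power_zero; simp)
  qed
  have slim: "s \<longlonglongrightarrow> A / B"
    unfolding s_def[abs_def] A_def B_def using Bnz B_def
    by (intro tendsto_divide qpoch_LIMSEQ n2) auto
  have ps: "(\<lambda>N. \<Sum>n<N. f n) = (\<lambda>N. P / (1+q^3) * (d N * s N + 2*(1-q)))"
  proof
    fix N
    have "(\<Sum>n<N. f n) = P * (\<Sum>n<N. q^(2*n) * (1 - q*q^(2*n)) * s n)"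
      by (simp add: fe sum_distrib_left)
    also have "\<dots> = P / (1+q^3) * (d N * s N + 2*(1-q))"
      using tel[of N, symmetric] q3 by (simp add: field_simps)
    finally show "(\<Sum>n<N. f n) = P / (1+q^3) * (d N * s N + 2*(1-q))" .
  qed
  have "(\<lambda>N. \<Sum>n<N. f n) \<longlonglongrightarrow> P / (1+q^3) * ((-1 + (q-1)*0 + q*0) * (A/B) + 2*(1-q))"
    unfolding ps by (intro tendsto_intros dlim slim)
  hence "f sums (P / (1+q^3) * ((-1 + (q-1)*0 + q*0) * (A/B) + 2*(1-q)))"
    by (simp add: sums_def)
  hence "suminf f = P / (1+q^3) * ((-1 + (q-1)*0 + q*0) * (A/B) + 2*(1-q))"
    by (rule sums_unique[symmetric])
  also have "\<dots> = 2 * (1 - q) * P / (1 + q ^ 3) - C / (1 + q ^ 3)"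
  proof -
    have C: "C = P * A / B" using CB Bnz by (simp add: field_simps)
    have q3b: "B + B * q^3 \<noteq> 0" using q3 Bnz by (metis mult_1_right distrib_left no_zero_divisors)
    have g: "P / D * (-X + Y) = Y * P / D - (P * X) / D" for P D X Y :: complex
      by (simp add: algebra_simps diff_divide_distrib add_divide_distrib)
    show ?thesis unfolding C using g[of P "1+q^3" "A/B" "2*(1-q)"] by simp
  qed
  finally show ?thesis unfolding f_def[abs_def] P_def C_def .
qed

lemma part2:
  assumes q: "norm q < 1"
  shows "(1 + q ^ 3) * (\<Sum>n. qpoch (- (q ^ 2)) (q ^ 2) n * q ^ (4*n+2) / qpoch q (q ^ 2) (n+1))
           = qpoch_inf (q ^ 4) (q ^ 4) / qpoch_inf (q ^ 2) q - 1"
proof -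
  have n2: "norm (q^2) < 1" and n4: "norm (q^4) < 1" and n3: "norm (q^3) < 1"
    and nm2: "norm (-(q^2)) < 1" using q norm_pow_lt1 by auto
  have q3: "1 + q^3 \<noteq> 0"
  proof
    assume "1 + q^3 = 0" hence "q^3 = -1" by (simp add: add_eq_0_iff)
    with n3 show False by simp
  qed
  define A where "A = qpoch_inf q (q^2)"
  define B where "B = qpoch_inf (-(q^2)) (q^2)"
  define P where "P = qpoch_inf (q^4) (q^4)"
  define C where "C = qpoch_inf q q"
  define E where "E = qpoch_inf (q^2) q"
  have Anz: "A \<noteq> 0" unfolding A_def using qpoch_nz[OF q n2] by simp
  have Bnz: "B \<noteq> 0" unfolding B_def using qpoch_nz[OF nm2 n2] by simp
  have Cnz: "C \<noteq> 0" unfolding C_def using qpoch_nz[OF q q] by simp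
  have Enz: "E \<noteq> 0" unfolding E_def using qpoch_nz[OF n2 q] by simp
  have CB: "C * B = P * A" unfolding A_def B_def C_def P_def using CB_PA[OF q] .
  have CE: "C = (1 - q) * E" unfolding C_def E_def using C_E[OF q] .
  define t where "t n = qpoch (-(q^2)) (q^2) n / qpoch q (q^2) n" for n
  define c where "c N = 1 - q + q^(2*N+1)" for N
  define g where "g n = qpoch (- (q ^ 2)) (q ^ 2) n * q ^ (4*n+2) / qpoch q (q ^ 2) (n+1)" for n
  have tel: "(1 + q^3) * (\<Sum>n<N. g n) = c N * t N - 1" for N
  proof (induction N)
    case 0 show ?case by (simp add: c_def t_def qpoch_def)
  next
    case (Suc N)
    define x where "x = q^N"
    have h: "q^(2*N) = x^2" "(q^2)^N = x^2" "q^(4*N+2) = q^2*x^4" "q^(2*N+1) = q*x^2"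
      "q^(2*Suc N+1) = q^3*x^2"
      unfolding x_def power_mult[symmetric]
      by (simp_all add: power_add[symmetric] mult.commute) (simp add: power_add numeral_3_eq_3)
    have nz: "1 - q*x^2 \<noteq> 0" using factor_nz[OF q n2, of N] h by simp
    have An: "qpoch q (q^2) N \<noteq> 0" using qpoch_nz(1)[OF q n2] by simp
    have ts: "t (Suc N) = t N * ((1 + q^2*x^2)/(1 - q*x^2))"
      unfolding t_def using h nz An by (simp add: qpoch_Suc field_simps)
    have gN: "g N = t N * (q^2*x^4/(1 - q*x^2))"
      unfolding g_def t_def using h nz An by (simp add: qpoch_Suc field_simps)
    have poly: "(1 - q + q*x^2)*(1-q*x^2) + (1+q^3)*(q^2*x^4) = (1 - q + q^3*x^2)*(1+q^2*x^2)"
      by algebra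
    have poly2: "(1 - q + q*x^2) + (1+q^3)*(q^2*x^4/(1 - q*x^2)) = (1 - q + q^3*x^2)*((1+q^2*x^2)/(1-q*x^2))"
      using poly nz by (simp add: field_simps)
    have "(1 + q^3) * (\<Sum>n<Suc N. g n) = c N * t N - 1 + (1+q^3) * g N"
      using Suc.IH by (simp add: distrib_left)
    also have "\<dots> = ((1 - q + q*x^2) + (1+q^3)*(q^2*x^4/(1 - q*x^2))) * t N - 1"
      unfolding gN c_def h by (simp add: algebra_simps)
    also have "\<dots> = c (Suc N) * t (Suc N) - 1"
      unfolding poly2 ts c_def h by (simp add: mult_ac)
    finally show ?case .
  qed
  have clim: "c \<longlonglongrightarrow> 1 - q + q * 0"
  proof -
    have "c = (\<lambda>N. 1 - q + q*(q^2)^N)"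
      by (auto simp: c_def fun_eq_iff power_mult[symmetric] power_add mult.commute)
    thus ?thesis using n2
      by (simp only:) (intro tendsto_intros LIMSEQ_power_zero; simp)
  qed
  have tlim: "t \<longlonglongrightarrow> B / A"
    unfolding t_def[abs_def] A_def B_def using Anz A_def
    by (intro tendsto_divide qpoch_LIMSEQ n2 q) auto
  have ps: "(\<lambda>N. \<Sum>n<N. g n) = (\<lambda>N. (c N * t N - 1) / (1+q^3))"
  proof
    fix N show "(\<Sum>n<N. g n) = (c N * t N - 1) / (1+q^3)"
      using tel[of N] q3 by (simp add: field_simps)
  qed
  have "(\<lambda>N. \<Sum>n<N. g n) \<longlonglongrightarrow> ((1 - q + q * 0) * (B / A) - 1) / (1+q^3)"
    unfolding ps by (intro tendsto_intros clim tlim q3)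
  hence "g sums (((1 - q + q * 0) * (B / A) - 1) / (1+q^3))"
    by (simp add: sums_def)
  hence "suminf g = ((1 - q + q * 0) * (B / A) - 1) / (1+q^3)"
    by (rule sums_unique[symmetric])
  hence "(1 + q^3) * suminf g = (1 - q) * (B / A) - 1" using q3 by simp
  also have "(1 - q) * (B / A) = P / E"
  proof -
    have "B / A = P / C" using CB Anz Cnz by (simp add: field_simps)
    moreover have "1 - q \<noteq> 0" using q by auto
    ultimately show ?thesis unfolding CE using Enz by simp
  qed
  finally show ?thesis unfolding g_def[abs_def] P_def E_def .
qed

theorem theorem2:
  fixes q :: complex
  assumes "norm q < 1"
  shows "((\<Sum>n. q ^ (2*n) * qpoch_inf (q ^ (4*n+4)) (q ^ 4) * qpoch q q (2*n+1))
           = 2 * (1 - q) * qpoch_inf (q ^ 4) (q ^ 4) / (1 + q ^ 3) - qpoch_inf q q / (1 + q ^ 3)) \<and>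
         ((1 + q ^ 3) * (\<Sum>n. qpoch (- (q ^ 2)) (q ^ 2) n * q ^ (4*n+2) / qpoch q (q ^ 2) (n+1))
           = qpoch_inf (q ^ 4) (q ^ 4) / qpoch_inf (q ^ 2) q - 1)"
  using part1[OF assms] part2[OF assms] by blast

end
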